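(* Fix a diffusion step $i$ with noise levels $\alpha^{x}_i,\alpha^{k}_i\in(0,1)$ and a noisy joint point $y_i=[x_i;k_i]\in\mathbb{R}^{n_x}\times\mathbb{R}^{n_k}$. Let $q(\cdot\mid y_i)$ be the product proposal on clean joint samples $$q(y_0\mid y_i)=p^{x}_{0|i}(x_0\mid x_i)\,q^{k}(k_0\mid k_i),\qquad q^{k}(k_0\mid k_i)=\mathcal N\!\Big(k_0;\ (\alpha^{k}_i)^{-1/2}k_i,\ \big(\tfrac{1}{\alpha^{k}_i}-1\big)I\Big).$$ Assume $0<\mathbb{E}_{\hat y_0\sim q(\cdot\mid y_i)}[V(\hat x_0,\hat k_0)\,p^{k}_0(\hat k_0)]<\infty$, and that all integrals below are finite and differentiation under the integral sign with respect to $y_i$ is permitted. Then the score of the noisy joint marginal satisfies $$\nabla_{y_i}\log p_i(y_i)=\frac{\mathbb{E}_{\hat y_0\sim q(\cdot\mid y_i)}\big[s_{\alpha^{y}_i}(\hat y_0\mid y_i)\,V(\hat x_0,\hat k_0)\,p^{k}_0(\hat k_0)\big]}{\mathbb{E}_{\hat y_0\sim q(\cdot\mid y_i)}\big[V(\hat x_0,\hat k_0)\,p^{k}_0(\hat k_0)\big]},$$ where $\hat y_0=[\hat x_0;\hat k_0]$.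
   Context: Let $p^{x}_0$ be a probability density on $\mathbb{R}^{n_x}$ (the model-free/diffusion data distribution), $p^{k}_0$ a probability density on $\mathbb{R}^{n_k}$ (the model-based prior), and $V:\mathbb{R}^{n_x}\times\mathbb{R}^{n_k}\to\mathbb{R}_{\ge 0}$ a measurable "interaction potential" such that $Z=\int p^{x}_0(x)p^{k}_0(k)V(x,k)\,dx\,dk\in(0,\infty)$. The clean joint density is $p_0(y_0)=Z^{-1}p^{x}_0(x_0)p^{k}_0(k_0)V(x_0,k_0)$ for $y_0=[x_0;k_0]$. For noise levels $\alpha^{x}_i,\alpha^{k}_i\in(0,1)$ write $\alpha^{y}_i=[\alpha^{x}_i;\alpha^{k}_i]$ and define the joint forward kernel as the product Gaussian $$p_{\alpha^{y}_i}(y_i\mid y_0)=\mathcal N\big(x_i;\sqrt{\alpha^{x}_i}x_0,(1-\alpha^{x}_i)I\big)\,\mathcal N\big(k_i;\sqrt{\alpha^{k}_i}k_0,(1-\alpha^{k}_i)I\big),$$ with the $x$-factor denoted $p^{x}_{\alpha^{x}_i}(x_i\mid x_0)$. The noisy joint marginal is $p_i(y_i)=\int p_{\alpha^{y}_i}(y_i\mid y_0)p_0(y_0)\,dy_0$. The model-free noisy marginal is $p^{x}_i(x_i)=\int p^{x}_{\alpha^{x}_i}(x_i\mid x_0)p^{x}_0(x_0)\,dx_0$ and the model-free denoising posterior is $p^{x}_{0|i}(x_0\mid x_i)=p^{x}_{\alpha^{x}_i}(x_i\mid x_0)p^{x}_0(x_0)/p^{x}_i(x_i)$. The (Tweedie)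 score of the forward kernel is $s_{\alpha^{y}_i}(y_0\mid y_i)=\nabla_{y_i}\log p_{\alpha^{y}_i}(y_i\mid y_0)$, i.e. the vector with $x$-block $-\frac{x_i-\sqrt{\alpha^{x}_i}x_0}{1-\alpha^{x}_i}$ and $k$-block $-\frac{k_i-\sqrt{\alpha^{k}_i}k_0}{1-\alpha^{k}_i}$. *)

theory Defs
  imports "HOL-Analysis.Analysis"
begin

definition mvn_density :: "'a::euclidean_space \<Rightarrow> real \<Rightarrow> 'a \<Rightarrow> real" where
  "mvn_density m v z = (2 * pi * v) powr (- real DIM('a) / 2) * exp (- (norm (z - m))\<^sup>2 / (2 * v))"

definition fwd_x :: "real \<Rightarrow> 'a::euclidean_space \<Rightarrow> 'a \<Rightarrow> real" where
  "fwd_x a xi x0 = mvn_density (sqrt a *\<^sub>R x0) (1 - a) xi"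

definition fwd_y :: "real \<Rightarrow> real \<Rightarrow> ('a::euclidean_space \<times> 'b::euclidean_space) \<Rightarrow> ('a \<times> 'b) \<Rightarrow> real" where
  "fwd_y ax ak yi y0 = fwd_x ax (fst yi) (fst y0) * fwd_x ak (snd yi) (snd y0)"

definition Zc :: "('a::euclidean_space \<Rightarrow> real) \<Rightarrow> ('b::euclidean_space \<Rightarrow> real) \<Rightarrow> ('a \<Rightarrow> 'b \<Rightarrow> real) \<Rightarrow> real" where
  "Zc px pk V = (LINT y|lborel. px (fst y) * pk (snd y) * V (fst y) (snd y))"

definition p0_joint :: "('a::euclidean_space \<Rightarrow> real) \<Rightarrow> ('b::euclidean_space \<Rightarrow> real) \<Rightarrow> ('a \<Rightarrow> 'b \<Rightarrow> real) \<Rightarrow> 'a \<times> 'b \<Rightarrow> real" where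
  "p0_joint px pk V y0 = px (fst y0) * pk (snd y0) * V (fst y0) (snd y0) / Zc px pk V"

definition pi_joint :: "real \<Rightarrow> real \<Rightarrow> ('a::euclidean_space \<Rightarrow> real) \<Rightarrow> ('b::euclidean_space \<Rightarrow> real) \<Rightarrow> ('a \<Rightarrow> 'b \<Rightarrow> real) \<Rightarrow> 'a \<times> 'b \<Rightarrow> real" where
  "pi_joint ax ak px pk V yi = (LINT y0|lborel. fwd_y ax ak yi y0 * p0_joint px pk V y0)"

definition pi_x :: "real \<Rightarrow> ('a::euclidean_space \<Rightarrow> real) \<Rightarrow> 'a \<Rightarrow> real" where
  "pi_x ax px xi = (LINT x0|lborel. fwd_x ax xi x0 * px x0)"

definition post_x :: "real \<Rightarrow> ('a::euclidean_space \<Rightarrow> real) \<Rightarrow> 'a \<Rightarrow> 'a \<Rightarrow> real" where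
  "post_x ax px xi x0 = fwd_x ax xi x0 * px x0 / pi_x ax px xi"

definition q_k :: "real \<Rightarrow> 'b::euclidean_space \<Rightarrow> 'b \<Rightarrow> real" where
  "q_k ak ki k0 = mvn_density ((1 / sqrt ak) *\<^sub>R ki) (1 / ak - 1) k0"

definition q_prop :: "real \<Rightarrow> real \<Rightarrow> ('a::euclidean_space \<Rightarrow> real) \<Rightarrow> 'a \<times> 'b::euclidean_space \<Rightarrow> 'a \<times> 'b \<Rightarrow> real" where
  "q_prop ax ak px yi y0 = post_x ax px (fst yi) (fst y0) * q_k ak (snd yi) (snd y0)"

definition tweedie_score :: "real \<Rightarrow> real \<Rightarrow> 'a::euclidean_space \<times> 'b::euclidean_space \<Rightarrow> 'a \<times> 'b \<Rightarrow> 'a \<times> 'b" where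
  "tweedie_score ax ak y0 yi =
     (- ((1 / (1 - ax)) *\<^sub>R (fst yi - sqrt ax *\<^sub>R fst y0)),
      - ((1 / (1 - ak)) *\<^sub>R (snd yi - sqrt ak *\<^sub>R snd y0)))"

end

theory Submission imports Defs begin

lemma fwd_q:
  fixes ki k0 :: "'b::euclidean_space"
  assumes "0 < a" "a < 1"
  shows "fwd_x a ki k0 = a powr (- real DIM('b) / 2) * q_k a ki k0"
proof -
  have e: "ki - sqrt a *\<^sub>R k0 = (- sqrt a) *\<^sub>R (k0 - (1 / sqrt a) *\<^sub>R ki)"
    using assms by (simp add: algebra_simps)
  have n: "(norm (ki - sqrt a *\<^sub>R k0))\<^sup>2 = a * (norm (k0 - (1 / sqrt a) *\<^sub>R ki))\<^sup>2"
    unfolding e using assms by (simp add: power_mult_distrib)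
  have ex: "(norm (ki - sqrt a *\<^sub>R k0))\<^sup>2 / (2 * (1 - a)) = (norm (k0 - (1 / sqrt a) *\<^sub>R ki))\<^sup>2 / (2 * (1 / a - 1))"
  proof -
    have "(norm (ki - sqrt a *\<^sub>R k0))\<^sup>2 / (2 * (1 - a)) = a * (norm (k0 - (1 / sqrt a) *\<^sub>R ki))\<^sup>2 / (2 * (1 - a))"
      by (simp only: n)
    also have "\<dots> = (norm (k0 - (1 / sqrt a) *\<^sub>R ki))\<^sup>2 / (2 * (1 / a - 1))"
      using assms by (simp add: field_simps)
    finally show ?thesis .
  qed
  have p: "(2 * pi * (1 - a)) powr (- real DIM('b) / 2) = a powr (- real DIM('b) / 2) * (2 * pi * (1 / a - 1)) powr (- real DIM('b) / 2)"
  proof -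
    have "2 * pi * (1 - a) = a * (2 * pi * (1 / a - 1))" using assms by (simp add: field_simps)
    then show ?thesis using assms by (simp add: powr_mult)
  qed
  have ex': "- (norm (ki - sqrt a *\<^sub>R k0))\<^sup>2 / (2 * (1 - a)) = - (norm (k0 - (1 / sqrt a) *\<^sub>R ki))\<^sup>2 / (2 * (1 / a - 1))"
    using ex by (simp add: divide_minus_left)
  show ?thesis unfolding fwd_x_def q_k_def mvn_density_def ex' p
    by simp
qed

lemma mvn_deriv:
  fixes m z :: "'a::euclidean_space" and v :: real
  assumes v: "v \<noteq> 0"
  shows "((\<lambda>z. mvn_density m v z) has_derivative
     (\<lambda>h. mvn_density m v z * ((- (1 / v) *\<^sub>R (z - m)) \<bullet> h))) (at z)"
proof -
  have "((\<lambda>z. (2 * pi * v) powr (- real DIM('a) / 2) * exp (- ((z - m) \<bullet> (z - m)) / (2 * v))) has_derivative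
     (\<lambda>h. (2 * pi * v) powr (- real DIM('a) / 2) * (exp (- ((z - m) \<bullet> (z - m)) / (2 * v)) * (- (h \<bullet> (z - m) + (z - m) \<bullet> h) / (2 * v))))) (at z)"
    using v by (auto intro!: derivative_eq_intros simp: fun_eq_iff field_simps)
  moreover have "(\<lambda>h. (2 * pi * v) powr (- real DIM('a) / 2) * (exp (- ((z - m) \<bullet> (z - m)) / (2 * v)) * (- (h \<bullet> (z - m) + (z - m) \<bullet> h) / (2 * v))))
     = (\<lambda>h. mvn_density m v z * ((- (1 / v) *\<^sub>R (z - m)) \<bullet> h))"
  proof
    fix h
    have ip: "((- (1 / v) *\<^sub>R (z - m)) \<bullet> h) = - ((z - m) \<bullet> h) / v"
      by (simp only: inner_scaleR_left) simp
    show "(2 * pi * v) powr (- real DIM('a) / 2) * (exp (- ((z - m) \<bullet> (z - m)) / (2 * v)) * (- (h \<bullet> (z - m) + (z - m) \<bullet> h) / (2 * v)))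
     = mvn_density m v z * ((- (1 / v) *\<^sub>R (z - m)) \<bullet> h)"
      unfolding ip mvn_density_def power2_norm_eq_inner using v
      by (simp add: inner_commute field_simps)
  qed
  ultimately show ?thesis unfolding mvn_density_def power2_norm_eq_inner by simp
qed

lemma fwd_y_deriv:
  fixes yi y0 :: "'a::euclidean_space \<times> 'b::euclidean_space"
  assumes "ax < 1" "ak < 1"
  shows "((\<lambda>y. fwd_y ax ak y y0) has_derivative
     (\<lambda>h. fwd_y ax ak yi y0 * (tweedie_score ax ak y0 yi \<bullet> h))) (at yi)"
proof -
  have dx: "((\<lambda>y. fwd_x ax (fst y) (fst y0)) has_derivative
     (\<lambda>h. mvn_density (sqrt ax *\<^sub>R fst y0) (1 - ax) (fst yi) * ((- (1 / (1 - ax)) *\<^sub>R (fst yi - sqrt ax *\<^sub>R fst y0)) \<bullet> fst h))) (at yi)"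
    unfolding fwd_x_def
    using has_derivative_compose[OF has_derivative_fst[OF has_derivative_ident] mvn_deriv[of "1 - ax" "sqrt ax *\<^sub>R fst y0" "fst yi"]] assms
    by simp
  have dk: "((\<lambda>y. fwd_x ak (snd y) (snd y0)) has_derivative
     (\<lambda>h. mvn_density (sqrt ak *\<^sub>R snd y0) (1 - ak) (snd yi) * ((- (1 / (1 - ak)) *\<^sub>R (snd yi - sqrt ak *\<^sub>R snd y0)) \<bullet> snd h))) (at yi)"
    unfolding fwd_x_def
    using has_derivative_compose[OF has_derivative_snd[OF has_derivative_ident] mvn_deriv[of "1 - ak" "sqrt ak *\<^sub>R snd y0" "snd yi"]] assms
    by simp
  have "((\<lambda>y. fwd_x ax (fst y) (fst y0) * fwd_x ak (snd y) (snd y0)) has_derivative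
     (\<lambda>h. fwd_x ax (fst yi) (fst y0) * (mvn_density (sqrt ak *\<^sub>R snd y0) (1 - ak) (snd yi) * ((- (1 / (1 - ak)) *\<^sub>R (snd yi - sqrt ak *\<^sub>R snd y0)) \<bullet> snd h))
        + (mvn_density (sqrt ax *\<^sub>R fst y0) (1 - ax) (fst yi) * ((- (1 / (1 - ax)) *\<^sub>R (fst yi - sqrt ax *\<^sub>R fst y0)) \<bullet> fst h)) * fwd_x ak (snd yi) (snd y0))) (at yi)"
    by (rule has_derivative_mult[OF dx dk])
  then show ?thesis
    unfolding fwd_y_def
    apply (rule has_derivative_eq_rhs)
    apply (rule ext)
    apply (simp add: tweedie_score_def fwd_x_def inner_prod_def algebra_simps)
    done
qed

theorem theorem1:
  fixes px :: "real ^ 'nx \<Rightarrow> real" and pk :: "real ^ 'nk \<Rightarrow> real"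
    and V :: "real ^ 'nx \<Rightarrow> real ^ 'nk \<Rightarrow> real"
    and ax ak :: real and yi :: "(real ^ 'nx) \<times> (real ^ 'nk)"
  assumes px_meas: "px \<in> borel_measurable lborel"
    and px_nonneg: "\<And>x. px x \<ge> 0"
    and px_int: "integrable lborel px" and px_one: "(LINT x|lborel. px x) = 1"
    and pk_meas: "pk \<in> borel_measurable lborel"
    and pk_nonneg: "\<And>k. pk k \<ge> 0"
    and pk_int: "integrable lborel pk" and pk_one: "(LINT k|lborel. pk k) = 1"
    and V_meas: "(\<lambda>y. V (fst y) (snd y)) \<in> borel_measurable lborel"
    and V_nonneg: "\<And>x k. V x k \<ge> 0"
    and Z_int: "integrable lborel (\<lambda>y. px (fst y) * pk (snd y) * V (fst y) (snd y))"
    and Z_pos: "Zc px pk V > 0"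
    and ax_range: "0 < ax" "ax < 1"
    and ak_range: "0 < ak" "ak < 1"
    and den_int: "integrable lborel (\<lambda>y0. q_prop ax ak px yi y0 * (V (fst y0) (snd y0) * pk (snd y0)))"
    and den_pos: "(LINT y0|lborel. q_prop ax ak px yi y0 * (V (fst y0) (snd y0) * pk (snd y0))) > 0"
    and num_int: "integrable lborel (\<lambda>y0. (q_prop ax ak px yi y0 * (V (fst y0) (snd y0) * pk (snd y0)))
                        *\<^sub>R tweedie_score ax ak y0 yi)"
    and pi_int: "integrable lborel (\<lambda>y0. fwd_y ax ak yi y0 * p0_joint px pk V y0)"
    and diff_int: "\<And>h. integrable lborel
          (\<lambda>y0. frechet_derivative (\<lambda>y. fwd_y ax ak y y0 * p0_joint px pk V y0) (at yi) h)"
    and diff_under_int: "(pi_joint ax ak px pk V has_derivative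
          (\<lambda>h. LINT y0|lborel. frechet_derivative (\<lambda>y. fwd_y ax ak y y0 * p0_joint px pk V y0) (at yi) h))
          (at yi)"
  shows "GDERIV (\<lambda>y. ln (pi_joint ax ak px pk V y)) yi :>
    (inverse (LINT y0|lborel. q_prop ax ak px yi y0 * (V (fst y0) (snd y0) * pk (snd y0))))
      *\<^sub>R (LINT y0|lborel. (q_prop ax ak px yi y0 * (V (fst y0) (snd y0) * pk (snd y0)))
                        *\<^sub>R tweedie_score ax ak y0 yi)"

proof -
  define Q where "Q y0 = q_prop ax ak px yi y0 * (V (fst y0) (snd y0) * pk (snd y0))" for y0
  define S where "S y0 = tweedie_score ax ak y0 yi" for y0
  define F where "F y0 = fwd_y ax ak yi y0 * p0_joint px pk V y0" for y0
  define P where "P = pi_x ax px (fst yi)"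
  define c where "c = ak powr (- real DIM(real ^ 'nk) / 2)"
  define Z where "Z = Zc px pk V"
  define den where "den = (LINT y0|lborel. Q y0)"
  define N where "N = (LINT y0|lborel. Q y0 *\<^sub>R S y0)"
  define K where "K = P * c / Z"
  have Zpos: "Z > 0" using Z_pos Z_def by simp
  have cpos: "c > 0" unfolding c_def using ak_range by simp
  have denpos: "den > 0" using den_pos unfolding den_def Q_def .
  have Pnz: "P \<noteq> 0"
  proof
    assume "P = 0"
    then have "\<And>y0. Q y0 = 0" unfolding Q_def q_prop_def post_x_def P_def by simp
    then have "Q = (\<lambda>_. 0)" by auto
    then have "den = 0" unfolding den_def by simp
    then show False using denpos by simp
  qed
  have mvn_nn: "\<And>(m::real ^ 'nx) v z. v > 0 \<Longrightarrow> mvn_density m v z \<ge> 0"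
    unfolding mvn_density_def by simp
  have Pnn: "P \<ge> 0" unfolding P_def pi_x_def
    apply (rule integral_nonneg_AE)
    apply (rule AE_I2)
    using mvn_nn[of "1 - ax"] ax_range px_nonneg unfolding fwd_x_def by simp
  have Kpos: "K > 0" unfolding K_def using Pnz Pnn cpos Zpos by simp
  have pt: "\<And>y0. F y0 = K * Q y0"
  proof -
    fix y0 :: "(real ^ 'nx) \<times> (real ^ 'nk)"
    have fk: "fwd_x ak (snd yi) (snd y0) = c * q_k ak (snd yi) (snd y0)"
      unfolding c_def using fwd_q[OF ak_range] .
    show "F y0 = K * Q y0"
      unfolding F_def Q_def K_def fwd_y_def p0_joint_def q_prop_def post_x_def fk
      using Pnz Zpos unfolding P_def Z_def by (simp add: field_simps)
  qed
  have piyi: "pi_joint ax ak px pk V yi = K * den"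
    unfolding pi_joint_def den_def using pt unfolding F_def by simp
  have Nint: "integrable lborel (\<lambda>y0. Q y0 *\<^sub>R S y0)" using num_int unfolding Q_def S_def .
  have fd: "\<And>y0. frechet_derivative (\<lambda>y. fwd_y ax ak y y0 * p0_joint px pk V y0) (at yi)
      = (\<lambda>h. F y0 * (S y0 \<bullet> h))"
  proof -
    fix y0 :: "(real ^ 'nx) \<times> (real ^ 'nk)"
    have "((\<lambda>y. fwd_y ax ak y y0 * p0_joint px pk V y0) has_derivative (\<lambda>h. F y0 * (S y0 \<bullet> h))) (at yi)"
      using has_derivative_mult_left[OF fwd_y_deriv[of ax ak y0 yi], of "p0_joint px pk V y0"] ax_range ak_range
      unfolding F_def S_def by (simp add: ac_simps)
    then show "frechet_derivative (\<lambda>y. fwd_y ax ak y y0 * p0_joint px pk V y0) (at yi) = (\<lambda>h. F y0 * (S y0 \<bullet> h))"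
      by (rule frechet_derivative_at[symmetric])
  qed
  have dint: "\<And>h. (LINT y0|lborel. frechet_derivative (\<lambda>y. fwd_y ax ak y y0 * p0_joint px pk V y0) (at yi) h)
      = h \<bullet> (K *\<^sub>R N)"
  proof -
    fix h :: "(real ^ 'nx) \<times> (real ^ 'nk)"
    have "(LINT y0|lborel. frechet_derivative (\<lambda>y. fwd_y ax ak y y0 * p0_joint px pk V y0) (at yi) h)
        = (LINT y0|lborel. K * ((Q y0 *\<^sub>R S y0) \<bullet> h))"
      by (simp add: fd pt mult.assoc)
    also have "\<dots> = K * ((LINT y0|lborel. Q y0 *\<^sub>R S y0) \<bullet> h)"
      using integral_inner_left[of h lborel "\<lambda>y0. Q y0 *\<^sub>R S y0", OF Nint]
      by (simp del: integral_inner_left)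
    also have "\<dots> = h \<bullet> (K *\<^sub>R N)" unfolding N_def by (simp add: inner_commute)
    finally show "?thesis h" .
  qed
  have g: "GDERIV (pi_joint ax ak px pk V) yi :> K *\<^sub>R N"
    unfolding gderiv_def using diff_under_int unfolding dint .
  have "GDERIV (\<lambda>y. ln (pi_joint ax ak px pk V y)) yi :> inverse (pi_joint ax ak px pk V yi) *\<^sub>R (K *\<^sub>R N)"
    by (rule GDERIV_DERIV_compose[OF g DERIV_ln]) (simp add: piyi Kpos denpos)
  moreover have "inverse (pi_joint ax ak px pk V yi) *\<^sub>R (K *\<^sub>R N) = inverse den *\<^sub>R N"
    unfolding piyi using Kpos by simp
  ultimately have "GDERIV (\<lambda>y. ln (pi_joint ax ak px pk V y)) yi :> inverse den *\<^sub>R N"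
    by (rule GDERIV_subst)
  then show ?thesis unfolding den_def N_def Q_def S_def .
qed

end
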